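(* Let $P$ be an infinite field and $P[X]=P[x_1,\ldots,x_n]$ the free commutative algebra over $P$ on a finite set $X$. Let $\mu:P[X]\to P[X]$ be a bijection such that $s\mapsto\mu s\mu^{-1}$ is an automorphism of the semigroup $\mathrm{End}(P[X])$, and suppose $\mu(0)=0$, $\mu(1)=1$ and $\mu(x_i)=x_i$ for all $i$. Then for every $a\in P$ and $u\in P[X]$, $$\mu(au)=\mu(a)\mu(u).$$
   Context: $\mathrm{End}(P[X])$ is the semigroup of all $P$-algebra endomorphisms of $P[X]$. *)

theory Defs
  imports "HOL-Library.Poly_Mapping"
begin

text \<open>The polynomial algebra P[X] over a field P on variable set X (= type 'x),
  realised as finitely supported maps from monomials (exponent vectors X \<Rightarrow>0 nat)
  to coefficients in P.\<close>
type_synonym ('x, 'a) mpoly = "('x \<Rightarrow>\<^sub>0 nat) \<Rightarrow>\<^sub>0 'a"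

definition const_poly :: "'a::zero \<Rightarrow> ('x, 'a) mpoly" where
  "const_poly c = Poly_Mapping.single 0 c"

definition var_poly :: "'x \<Rightarrow> ('x, 'a::{zero,one}) mpoly" where
  "var_poly x = Poly_Mapping.single (Poly_Mapping.single x 1) 1"

definition alg_End :: "(('x, 'a::field) mpoly \<Rightarrow> ('x, 'a) mpoly) set" where
  "alg_End = {f. (\<forall>u v. f (u + v) = f u + f v) \<and> (\<forall>u v. f (u * v) = f u * f v) \<and> f 1 = 1
                 \<and> (\<forall>c u. f (const_poly c * u) = const_poly c * f u)}"

text \<open>s \<mapsto> \<mu> s \<mu>^-1 is an automorphism of the semigroup End(P[X]) (for a bijection \<mu>):
  it maps End into End and onto End (injectivity and compatibility with composition
  are automatic for conjugation by a bijection).\<close>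
definition conj_is_End_auto :: "(('x, 'a::field) mpoly \<Rightarrow> ('x, 'a) mpoly) \<Rightarrow> bool" where
  "conj_is_End_auto \<mu> \<longleftrightarrow>
     (\<forall>s\<in>alg_End. \<mu> \<circ> s \<circ> inv \<mu> \<in> alg_End) \<and>
     (\<forall>t\<in>alg_End. \<exists>s\<in>alg_End. \<mu> \<circ> s \<circ> inv \<mu> = t)"

end

theory Submission imports Defs "HOL-Computational_Algebra.Polynomial"
begin

definition mono :: "('x::finite \<Rightarrow> ('x,'a::field) mpoly) \<Rightarrow> ('x \<Rightarrow>\<^sub>0 nat) \<Rightarrow> ('x,'a) mpoly" where
  "mono \<sigma> m = (\<Prod>i\<in>UNIV. \<sigma> i ^ Poly_Mapping.lookup m i)"

definition subst :: "('x::finite \<Rightarrow> ('x,'a::field) mpoly) \<Rightarrow> ('x,'a) mpoly \<Rightarrow> ('x,'a) mpoly" where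
  "subst \<sigma> p = (\<Sum>m\<in>Poly_Mapping.keys p. const_poly (Poly_Mapping.lookup p m) * mono \<sigma> m)"

lemma const_add: "const_poly (a + b) = const_poly a + const_poly b"
  by (simp add: const_poly_def single_add)
lemma const_mult: "const_poly (a * b) = const_poly a * (const_poly b :: ('x,'a::field) mpoly)"
  by (simp add: const_poly_def mult_single)
lemma const_zero[simp]: "const_poly 0 = 0"
  by (simp add: const_poly_def)
lemma const_one[simp]: "const_poly 1 = 1"
  by (simp add: const_poly_def)
lemma const_inj: "const_poly a = const_poly b \<longleftrightarrow> a = b"
  by (metis const_poly_def lookup_single_eq)

lemma mono_add: "mono \<sigma> (m + n) = mono \<sigma> m * mono \<sigma> n"
  by (simp add: mono_def lookup_add power_add prod.distrib)
lemma mono_zero[simp]: "mono \<sigma> 0 = 1"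
  by (simp add: mono_def)

lemma subst_superset:
  assumes "finite S" "Poly_Mapping.keys p \<subseteq> S"
  shows "subst \<sigma> p = (\<Sum>m\<in>S. const_poly (Poly_Mapping.lookup p m) * mono \<sigma> m)"
  unfolding subst_def
  by (rule sum.mono_neutral_left) (use assms in \<open>auto simp: in_keys_iff\<close>)

lemma subst_add: "subst \<sigma> (p + q) = subst \<sigma> p + subst \<sigma> q"
proof -
  let ?S = "Poly_Mapping.keys p \<union> Poly_Mapping.keys q \<union> Poly_Mapping.keys (p+q)"
  have "subst \<sigma> (p + q) = (\<Sum>m\<in>?S. const_poly (Poly_Mapping.lookup (p+q) m) * mono \<sigma> m)"
    by (rule subst_superset) auto
  also have "\<dots> = (\<Sum>m\<in>?S. const_poly (Poly_Mapping.lookup p m) * mono \<sigma> m) + (\<Sum>m\<in>?S. const_poly (Poly_Mapping.lookup q m) * mono \<sigma> m)"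
    by (simp add: lookup_add const_add distrib_right sum.distrib)
  also have "\<dots> = subst \<sigma> p + subst \<sigma> q"
    by (subst (1 2) subst_superset[of ?S]) auto
  finally show ?thesis .
qed

lemma subst_zero[simp]: "subst \<sigma> 0 = 0"
  by (simp add: subst_def)

lemma subst_sum: "subst \<sigma> (sum f A) = (\<Sum>a\<in>A. subst \<sigma> (f a))"
  by (induction A rule: infinite_finite_induct) (auto simp: subst_add)

lemma subst_single: "subst \<sigma> (Poly_Mapping.single m c) = const_poly c * mono \<sigma> m"
  by (cases "c = 0") (simp_all add: subst_def)

lemma decomp: "p = (\<Sum>m\<in>Poly_Mapping.keys p. Poly_Mapping.single m (Poly_Mapping.lookup p m))"
proof (rule poly_mapping_eqI)
  fix k
  show "Poly_Mapping.lookup p k = Poly_Mapping.lookup (\<Sum>m\<in>Poly_Mapping.keys p. Poly_Mapping.single m (Poly_Mapping.lookup p m)) k"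
    by (simp add: lookup_sum lookup_single when_def in_keys_iff)
qed

lemma subst_mult: "subst \<sigma> (p * q) = subst \<sigma> p * subst \<sigma> q"
proof -
  have "p * q = (\<Sum>m\<in>Poly_Mapping.keys p. Poly_Mapping.single m (Poly_Mapping.lookup p m)) * (\<Sum>n\<in>Poly_Mapping.keys q. Poly_Mapping.single n (Poly_Mapping.lookup q n))"
    using decomp[of p] decomp[of q] by simp
  also have "\<dots> = (\<Sum>m\<in>Poly_Mapping.keys p. \<Sum>n\<in>Poly_Mapping.keys q. Poly_Mapping.single (m+n) (Poly_Mapping.lookup p m * Poly_Mapping.lookup q n))"
    by (simp add: sum_product mult_single)
  finally have "subst \<sigma> (p*q) = (\<Sum>m\<in>Poly_Mapping.keys p. \<Sum>n\<in>Poly_Mapping.keys q. const_poly (Poly_Mapping.lookup p m) * mono \<sigma> m * (const_poly (Poly_Mapping.lookup q n) * mono \<sigma> n))"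
    by (simp add: subst_sum subst_single mono_add const_mult mult_ac)
  also have "\<dots> = subst \<sigma> p * subst \<sigma> q"
    by (simp add: subst_def sum_product)
  finally show ?thesis .
qed

lemma subst_const: "subst \<sigma> (const_poly c) = const_poly c"
  by (simp add: const_poly_def subst_single)

lemma subst_End: "subst \<sigma> \<in> alg_End"
  unfolding alg_End_def
  using subst_add subst_mult subst_const[of \<sigma> 1] by (auto simp: subst_mult subst_const)

lemma subst_var: "subst \<sigma> (var_poly i) = \<sigma> i"
proof -
  have "mono \<sigma> (Poly_Mapping.single i 1) = \<sigma> i"
    unfolding mono_def lookup_single
    by (subst prod.remove[of _ i]) (auto simp: when_def)
  then show ?thesis by (simp add: var_poly_def subst_single)
qed


definition E :: "'x \<Rightarrow> 'a::field poly \<Rightarrow> ('x,'a) mpoly" where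
  "E x0 p = poly (map_poly const_poly p) (var_poly x0)"

lemma E_pCons: "E x0 (pCons a p) = const_poly a + var_poly x0 * E x0 p"
  by (simp add: E_def map_poly_pCons)

lemma E_0[simp]: "E x0 0 = 0"
  by (simp add: E_def)

lemma E_const: "E x0 [:c:] = const_poly c"
  by (simp add: E_pCons)

lemma E_add: "E x0 (p + q) = E x0 p + E x0 q"
  by (induction p q rule: poly_induct2) (simp_all add: E_pCons const_add algebra_simps)

lemma E_smult: "E x0 (smult c p) = const_poly c * E x0 p"
  by (induction p) (simp_all add: E_pCons const_mult algebra_simps)

lemma E_mult: "E x0 (p * q) = E x0 p * E x0 q"
  by (induction p) (simp_all add: E_pCons E_add E_smult algebra_simps)

lemma E_pcompose: "E x0 (pcompose p q) = poly (map_poly const_poly p) (E x0 q)"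
  by (induction p) (simp_all add: pcompose_pCons E_add E_mult E_const map_poly_pCons)

lemma End_E:
  assumes "h \<in> alg_End"
  shows "h (E x0 p) = poly (map_poly const_poly p) (h (var_poly x0))"
proof -
  have add: "h (u + v) = h u + h v" and mul: "h (u * v) = h u * h v" and one: "h 1 = 1"
    and cl: "h (const_poly c * u) = const_poly c * h u" for u v c
    using assms by (auto simp: alg_End_def)
  have z: "h 0 = 0" using add[of 0 0] by simp
  have c: "h (const_poly c) = const_poly c" for c
    using cl[of c 1] one by simp
  show ?thesis
    by (induction p) (simp_all add: E_pCons add mul c z map_poly_pCons)
qed

lemma poly_const_hom: "poly (map_poly const_poly p) (const_poly c) = (const_poly (poly p c) :: ('x,'a::field) mpoly)"
  by (induction p) (simp_all add: map_poly_pCons const_add const_mult)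

lemma E_inj:
  fixes x0 :: "'x::finite"
  assumes inf: "infinite (UNIV :: 'a::field set)" and eq: "E x0 p = E x0 (q :: 'a poly)"
  shows "p = q"
proof -
  have "poly p c = poly q c" for c
  proof -
    have "subst (\<lambda>i. const_poly c) (E x0 p) = subst (\<lambda>i. const_poly c) (E x0 q)" using eq by simp
    then show ?thesis
      by (simp add: End_E[OF subst_End] subst_var poly_const_hom const_inj)
  qed
  then have "{x. poly (p - q) x = 0} = UNIV" by auto
  with inf poly_roots_finite[of "p - q"] show ?thesis by auto
qed

lemma rangeE_closed:
  "u \<in> range (E x0) \<Longrightarrow> v \<in> range (E x0) \<Longrightarrow> u + v \<in> range (E x0)"
  "u \<in> range (E x0) \<Longrightarrow> v \<in> range (E x0) \<Longrightarrow> u * v \<in> range (E x0)"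
  "const_poly c \<in> range (E x0)" "0 \<in> range (E x0)" "1 \<in> range (E x0)"
  "var_poly x0 \<in> range (E x0)"
proof -
  show "u \<in> range (E x0) \<Longrightarrow> v \<in> range (E x0) \<Longrightarrow> u + v \<in> range (E x0)" using E_add[of x0, symmetric] by blast
  show "u \<in> range (E x0) \<Longrightarrow> v \<in> range (E x0) \<Longrightarrow> u * v \<in> range (E x0)" using E_mult[of x0, symmetric] by blast
  show c: "const_poly c \<in> range (E x0)" for c by (metis E_const rangeI)
  show "0 \<in> range (E x0)" using c[of 0] by simp
  show "1 \<in> range (E x0)" using c[of 1] by simp
  have "E x0 [:0,1:] = var_poly x0" by (simp add: E_pCons)
  then show "var_poly x0 \<in> range (E x0)" by (metis rangeI)
qed

lemma rangeE_prod: "finite A \<Longrightarrow> (\<And>i. i \<in> A \<Longrightarrow> f i \<in> range (E x0)) \<Longrightarrow> prod f A \<in> range (E x0)"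
  by (induction A rule: finite_induct) (auto simp: rangeE_closed)

lemma rangeE_sum: "finite A \<Longrightarrow> (\<And>i. i \<in> A \<Longrightarrow> f i \<in> range (E x0)) \<Longrightarrow> sum f A \<in> range (E x0)"
  by (induction A rule: finite_induct) (auto simp: rangeE_closed)

lemma rangeE_power: "u \<in> range (E x0) \<Longrightarrow> u ^ n \<in> range (E x0)"
  by (induction n) (auto simp: rangeE_closed)

lemma subst_rangeE:
  assumes "\<And>i. \<sigma> i \<in> range (E x0)"
  shows "subst \<sigma> p \<in> range (E x0)"
  unfolding subst_def mono_def
  by (intro rangeE_sum rangeE_closed(2) rangeE_closed(3) rangeE_prod rangeE_power assms) auto


theorem lemma3p3:
  fixes \<mu> :: "('x::finite, 'a::field) mpoly \<Rightarrow> ('x, 'a) mpoly"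
  assumes "infinite (UNIV :: 'a set)"
    and "bij \<mu>"
    and "conj_is_End_auto \<mu>"
    and "\<mu> 0 = 0" and "\<mu> 1 = 1"
    and "\<forall>x. \<mu> (var_poly x) = var_poly x"
  shows "\<forall>a u. \<mu> (const_poly a * u) = \<mu> (const_poly a) * \<mu> u"
proof (intro allI)
  fix a :: 'a and u :: "('x,'a) mpoly"
  define x0 :: 'x where "x0 = undefined"
  define X :: "('x,'a) mpoly" where "X = var_poly x0"
  have inj: "inj \<mu>" using assms(2) bij_is_inj by blast
  have muX: "\<mu> X = X" using assms(6) X_def by simp
  have endC: "h (const_poly c * v) = const_poly c * h v" if "h \<in> alg_End" for h c v
    using that by (auto simp: alg_End_def)
  have endZ: "h 0 = 0" if "h \<in> alg_End" for h
  proof -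
    have "h (0 + 0) = h 0 + h 0" using that unfolding alg_End_def by blast
    then show ?thesis by simp
  qed
  have conj1: "\<exists>t\<in>alg_End. \<forall>v. t (\<mu> v) = \<mu> (s v)" if "s \<in> alg_End" for s
  proof -
    have "\<forall>s\<in>alg_End. \<mu> \<circ> s \<circ> inv \<mu> \<in> alg_End"
      using assms(3) unfolding conj_is_End_auto_def by (rule conjunct1)
    then have "\<mu> \<circ> s \<circ> inv \<mu> \<in> alg_End" using that by (rule bspec)
    moreover have "\<forall>v. (\<mu> \<circ> s \<circ> inv \<mu>) (\<mu> v) = \<mu> (s v)" using inv_f_f[OF inj] by simp
    ultimately show ?thesis by blast
  qed
  have conj2: "\<exists>s\<in>alg_End. \<forall>v. t (\<mu> v) = \<mu> (s v)" if "t \<in> alg_End" for t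
  proof -
    have "\<forall>t\<in>alg_End. \<exists>s\<in>alg_End. \<mu> \<circ> s \<circ> inv \<mu> = t"
      using assms(3) unfolding conj_is_End_auto_def by (rule conjunct2)
    then have "\<exists>s\<in>alg_End. \<mu> \<circ> s \<circ> inv \<mu> = t" using that by (rule bspec)
    then obtain s where s: "s \<in> alg_End" "\<mu> \<circ> s \<circ> inv \<mu> = t" by (rule bexE)
    have "\<forall>v. t (\<mu> v) = \<mu> (s v)" unfolding s(2)[symmetric] using inv_f_f[OF inj] by simp
    with s show ?thesis by blast
  qed
  define sw :: "('x,'a) mpoly \<Rightarrow> ('x,'a) mpoly \<Rightarrow> ('x,'a) mpoly" where "sw w = subst (\<lambda>i. if i = x0 then w else var_poly i)" for w
  have sw_End: "sw w \<in> alg_End" for w unfolding sw_def by (rule subst_End)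
  have swX: "sw w X = w" for w unfolding sw_def X_def by (simp add: subst_var)
  show "\<mu> (const_poly a * u) = \<mu> (const_poly a) * \<mu> u"
  proof (cases "a = 0")
    case True
    then show ?thesis using assms(4) by simp
  next
    case False
    define f where "f = \<mu> (const_poly a * X)"
    define g where "g = \<mu> (const_poly (inverse a) * X)"
    define r where "r = subst (\<lambda>i. if i = x0 then X else 0)"
    have r_End: "r \<in> alg_End" unfolding r_def by (rule subst_End)
    obtain sr where sr: "sr \<in> alg_End" "\<And>v. r (\<mu> v) = \<mu> (sr v)" using conj2[OF r_End] by blast
    have "\<mu> (sr X) = \<mu> X" using sr(2)[of X] muX by (simp add: r_def X_def subst_var)
    then have srX: "sr X = X" using inj by (simp add: inj_eq)
    have rE: "r v \<in> range (E x0)" for v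
      unfolding r_def by (rule subst_rangeE) (auto simp: X_def rangeE_closed)
    have "r f = f" unfolding f_def using sr(2) endC[OF sr(1)] srX by simp
    with rE[of f] obtain pf where pf: "f = E x0 pf" by auto
    have "r g = g" unfolding g_def using sr(2) endC[OF sr(1)] srX by simp
    with rE[of g] obtain pg where pg: "g = E x0 pg" by auto
    obtain t1 where t1: "t1 \<in> alg_End" "\<And>v. t1 (\<mu> v) = \<mu> (sw (const_poly a * X) v)"
      using conj1[OF sw_End] by blast
    have t1X: "t1 X = f" using t1(2)[of X] muX swX f_def by simp
    have "t1 g = \<mu> (const_poly (inverse a) * (const_poly a * X))"
      unfolding g_def t1(2) endC[OF sw_End] swX ..
    also have "\<dots> = X" using False muX by (simp add: mult.assoc[symmetric] const_mult[symmetric])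
    finally have "t1 g = X" .
    then have "E x0 (pcompose pg pf) = E x0 [:0,1:]"
      using End_E[OF t1(1), of x0 pg] t1X pf pg by (simp add: E_pcompose E_pCons X_def)
    then have "pcompose pg pf = [:0,1:]" using E_inj[OF assms(1)] by blast
    then have "degree pg * degree pf = 1" using degree_pcompose[of pg pf] by simp
    then have dpf: "degree pf = 1" by simp
    define z where "z = subst (\<lambda>i. 0 :: ('x,'a) mpoly)"
    have z_End: "z \<in> alg_End" unfolding z_def by (rule subst_End)
    obtain sz where sz: "sz \<in> alg_End" "\<And>v. z (\<mu> v) = \<mu> (sz v)" using conj2[OF z_End] by blast
    have "\<mu> (sz X) = \<mu> 0" using sz(2)[of X] muX assms(4) by (simp add: z_def X_def subst_var)
    then have szX: "sz X = 0" using inj by (simp add: inj_eq)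
    have "z f = 0" unfolding f_def sz(2) endC[OF sz(1)] szX using assms(4) by simp
    moreover have "z f = poly (map_poly const_poly pf) 0"
      using End_E[OF z_End, of x0 pf] pf by (simp add: z_def subst_var)
    ultimately have "const_poly (poly pf 0) = (0 :: ('x,'a) mpoly)"
      using poly_const_hom[of pf 0] by (metis const_zero)
    then have c0: "coeff pf 0 = 0" by (simp add: poly_0_coeff_0 const_inj[of _ 0, simplified])
    define b where "b = coeff pf 1"
    have "pf = [:0, b:]"
    proof (rule poly_eqI)
      fix n show "coeff pf n = coeff [:0, b:] n"
        using c0 dpf by (cases n) (auto simp: b_def coeff_pCons coeff_eq_0 split: nat.split)
    qed
    then have fb: "f = const_poly b * X" using pf by (simp add: E_pCons X_def mult.commute)
    have key: "\<mu> (const_poly a * v) = const_poly b * \<mu> v" for v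
    proof -
      obtain tv where tv: "tv \<in> alg_End" "\<And>w. tv (\<mu> w) = \<mu> (sw v w)"
        using conj1[OF sw_End] by blast
      have "\<mu> (const_poly a * v) = \<mu> (sw v (const_poly a * X))"
        using endC[OF sw_End] swX by simp
      also have "\<dots> = tv f" unfolding f_def tv(2) ..
      also have "\<dots> = const_poly b * tv X" unfolding fb endC[OF tv(1)] ..
      also have "tv X = \<mu> v" using tv(2)[of X] muX swX by simp
      finally show ?thesis .
    qed
    have "\<mu> (const_poly a) = const_poly b" using key[of 1] assms(5) by simp
    then show ?thesis using key by simp
  qed
qed

end
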